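(* A set $\mathcal{K}\subseteq\wp(\mathcal{G})$ is coherent if and only if there is a non-empty set $\mathfrak{D}$ whose members are non-empty sets of coherent sets of desirable gambles, such that $\mathfrak{D}$ has the finite intersection property (there are no $\mathbb{D}_1,\ldots,\mathbb{D}_n\in\mathfrak{D}$ with $\mathbb{D}_1\cap\cdots\cap\mathbb{D}_n=\emptyset$), and for all $B\subseteq\mathcal{G}$: $B\in\mathcal{K}$ iff there are finitely many $\mathbb{D}_1,\ldots,\mathbb{D}_n\in\mathfrak{D}$ such that $B\cap D\neq\emptyset$ for every $D\in\mathbb{D}_1\cap\cdots\cap\mathbb{D}_n$.
   Context: $\Omega$ is a non-empty set and $\mathcal{G}$ is the set of bounded functions $\Omega\to\mathbb{R}$. $f\geq g$ means pointwise $\geq$; $f\gneq g$ means $f\geq g$ and $f\neq g$; $\mathcal{G}_{\gneq 0}=\{f: f\gneq 0\}$. $\mathrm{posi}(B)=\{\sum_{i=1}^m\lambda_i h_i: m\geq1,\lambda_i>0,h_i\in B\}$. A set $D\subseteq\mathcal{G}$ is coherent if $0\notin D$; $\mathcal{G}_{\gneq0}\subseteq D$; $\lambda g\in D$ whenever $g\in D,\lambda>0$; and $f+g\in D$ whenever $f,g\in D$. A set $\mathcal{K}\subseteq\wp(\mathcal{G})$ is coherent if: (K$_\emptyset$) $\emptyset\notin\mathcal{K}$; (K$_0$) if $A\in\mathcal{K}$ then $A\setminus\{0\}\in\mathcal{K}$; (K$_{\gneq0}$) if $g\in\mathcal{G}_{\gneq0}$ then $\{g\}\in\mathcal{K}$;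 (K$_\supseteq$) if $A\in\mathcal{K}$ and $B\supseteq A$ then $B\in\mathcal{K}$; (K$_{\mathrm{Dom}}$) if $A\in\mathcal{K}$ and for each $g\in A$, $f_g$ is a gamble with $f_g\geq g$, then $\{f_g: g\in A\}\in\mathcal{K}$; (K$_{\mathrm{Add}}$) if $A_1,\ldots,A_n\in\mathcal{K}$ (finitely many) and for each $\langle g_1,\ldots,g_n\rangle\in A_1\times\cdots\times A_n$, $f_{\langle g_1,\ldots,g_n\rangle}$ is some member of $\mathrm{posi}(\{g_1,\ldots,g_n\})$, then $\{f_{\langle g_1,\ldots,g_n\rangle}:\langle g_1,\ldots,g_n\rangle\in A_1\times\cdots\times A_n\}\in\mathcal{K}$. *)

theory Defs
  imports Complex_Main "HOL-Library.FuncSet"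
begin

definition gambles :: "('w \<Rightarrow> real) set" where
  "gambles = {f. \<exists>c. \<forall>w. \<bar>f w\<bar> \<le> c}"

definition posgambles :: "('w \<Rightarrow> real) set" where
  "posgambles = {f \<in> gambles. (\<forall>w. f w \<ge> 0) \<and> (\<exists>w. f w \<noteq> 0)}"

definition posi :: "('w \<Rightarrow> real) set \<Rightarrow> ('w \<Rightarrow> real) set" where
  "posi B = {f. \<exists>(m::nat) (lam::nat \<Rightarrow> real) (h::nat \<Rightarrow> 'w \<Rightarrow> real).
      m \<ge> 1 \<and> (\<forall>i<m. lam i > 0 \<and> h i \<in> B) \<and> f = (\<lambda>w. \<Sum>i<m. lam i * h i w)}"

definition coherent_D :: "('w \<Rightarrow> real) set \<Rightarrow> bool" where
  "coherent_D D \<longleftrightarrow> D \<subseteq> gambles \<and> (\<lambda>w. 0) \<notin> D \<and> posgambles \<subseteq> D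
     \<and> (\<forall>g\<in>D. \<forall>l::real. l > 0 \<longrightarrow> (\<lambda>w. l * g w) \<in> D)
     \<and> (\<forall>f\<in>D. \<forall>g\<in>D. (\<lambda>w. f w + g w) \<in> D)"

definition coherent_K :: "('w \<Rightarrow> real) set set \<Rightarrow> bool" where
  "coherent_K K \<longleftrightarrow> K \<subseteq> Pow gambles
     \<and> {} \<notin> K
     \<and> (\<forall>A\<in>K. A - {\<lambda>w. 0} \<in> K)
     \<and> (\<forall>g\<in>posgambles. {g} \<in> K)
     \<and> (\<forall>A\<in>K. \<forall>B. A \<subseteq> B \<and> B \<subseteq> gambles \<longrightarrow> B \<in> K)
     \<and> (\<forall>A\<in>K. \<forall>F. (\<forall>g\<in>A. F g \<in> gambles \<and> (\<forall>w. F g w \<ge> g w)) \<longrightarrow> F ` A \<in> K)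
     \<and> (\<forall>(n::nat) (As::nat \<Rightarrow> ('w \<Rightarrow> real) set)
          (F::(nat \<Rightarrow> 'w \<Rightarrow> real) \<Rightarrow> 'w \<Rightarrow> real).
          (\<forall>i<n. As i \<in> K) \<and>
          (\<forall>gs \<in> PiE {..<n} As. F gs \<in> posi (gs ` {..<n}))
          \<longrightarrow> F ` (PiE {..<n} As) \<in> K)"

end

theory Submission
  imports Defs
begin



lemma gambles_add: "f \<in> gambles \<Longrightarrow> g \<in> gambles \<Longrightarrow> (\<lambda>w. f w + g w) \<in> gambles"
proof -
  assume "f \<in> gambles" "g \<in> gambles"
  then obtain c d where "\<forall>w. \<bar>f w\<bar> \<le> c" "\<forall>w. \<bar>g w\<bar> \<le> d" by (auto simp: gambles_def)
  then have "\<forall>w. \<bar>f w + g w\<bar> \<le> c + d"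
    by (meson abs_triangle_ineq add_mono order_trans)
  then show ?thesis by (auto simp: gambles_def)
qed

lemma gambles_scale: "f \<in> gambles \<Longrightarrow> (\<lambda>w. c * f w) \<in> gambles"
proof -
  assume "f \<in> gambles"
  then obtain d where d: "\<forall>w. \<bar>f w\<bar> \<le> d" by (auto simp: gambles_def)
  have "\<forall>w. \<bar>c * f w\<bar> \<le> \<bar>c\<bar> * d"
    using d by (simp add: abs_mult mult_left_mono)
  then show ?thesis by (auto simp: gambles_def)
qed

lemma gambles_zero: "(\<lambda>w. 0) \<in> gambles"
  by (auto simp: gambles_def)

lemma gambles_sum: "finite I \<Longrightarrow> (\<forall>i\<in>I. h i \<in> gambles) \<Longrightarrow> (\<lambda>w. \<Sum>i\<in>I. c i * h i w) \<in> gambles"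
proof (induction I rule: finite_induct)
  case empty then show ?case by (simp add: gambles_zero)
next
  case (insert x F)
  then show ?case using gambles_add[OF gambles_scale[of "h x" "c x"]] by simp
qed

lemma gambles_diff: "f \<in> gambles \<Longrightarrow> g \<in> gambles \<Longrightarrow> (\<lambda>w. f w - g w) \<in> gambles"
  using gambles_add[of f "\<lambda>w. (-1) * g w"] gambles_scale[of g "-1"] by simp

lemma posi_single: "l > 0 \<Longrightarrow> h \<in> B \<Longrightarrow> (\<lambda>w. l * h w) \<in> posi B"
  unfolding posi_def
  by (rule CollectI, rule exI[of _ 1], rule exI[of _ "\<lambda>_. l"], rule exI[of _ "\<lambda>_. h"]) simp

lemma sum_split_add: "(\<Sum>i<(m1::nat)+m2. f i) = (\<Sum>i<m1. f i) + (\<Sum>i<m2. f (i + m1))"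
  by (induction m2) (simp_all add: algebra_simps)

lemma posi_add: "f \<in> posi B \<Longrightarrow> g \<in> posi B \<Longrightarrow> (\<lambda>w. f w + g w) \<in> posi B"
proof -
  assume "f \<in> posi B" "g \<in> posi B"
  obtain m1 l1 h1 where
    A: "(m1::nat) \<ge> 1" "\<forall>i<m1. l1 i > 0 \<and> h1 i \<in> B" "f = (\<lambda>w. \<Sum>i<m1. l1 i * h1 i w)"
    using \<open>f \<in> posi B\<close> unfolding posi_def by auto
  obtain m2 l2 h2 where
    C: "(m2::nat) \<ge> 1" "\<forall>i<m2. l2 i > 0 \<and> h2 i \<in> B" "g = (\<lambda>w. \<Sum>i<m2. l2 i * h2 i w)"
    using \<open>g \<in> posi B\<close> unfolding posi_def by auto
  define l where "l i = (if i < m1 then l1 i else l2 (i - m1))" for i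
  define h where "h i = (if i < m1 then h1 i else h2 (i - m1))" for i
  have "\<forall>i<m1+m2. l i > 0 \<and> h i \<in> B" using A C by (auto simp: l_def h_def)
  moreover have "(\<lambda>w. f w + g w) = (\<lambda>w. \<Sum>i<m1+m2. l i * h i w)"
    by (simp add: sum_split_add A C l_def h_def)
  ultimately show ?thesis unfolding posi_def using A by (auto intro!: exI[of _ "m1+m2"])
qed

lemma posi_finite: "finite I \<Longrightarrow> I \<noteq> {} \<Longrightarrow> (\<forall>i\<in>I. lam i > 0 \<and> h i \<in> B)
   \<Longrightarrow> (\<lambda>w. \<Sum>i\<in>I. lam i * h i w) \<in> posi B"
proof (induction I rule: finite_ne_induct)
  case (singleton x) then show ?case by (simp add: posi_single)
next
  case (insert x F)
  then show ?case using posi_add[OF posi_single[of "lam x" "h x" B]] by simp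
qed

lemma coh_sum: "coherent_D D \<Longrightarrow> (m::nat) \<ge> 1 \<Longrightarrow> (\<forall>i<m. lam i > 0 \<and> h i \<in> D)
   \<Longrightarrow> (\<lambda>w. \<Sum>i<m. lam i * h i w) \<in> D"
proof (induction m)
  case 0 then show ?case by simp
next
  case (Suc k)
  show ?case
  proof (cases "k = 0")
    case True then show ?thesis using Suc.prems unfolding coherent_D_def by simp
  next
    case False
    then have "(\<lambda>w. \<Sum>i<k. lam i * h i w) \<in> D" using Suc by simp
    moreover have "(\<lambda>w. lam k * h k w) \<in> D" using Suc.prems unfolding coherent_D_def by simp
    ultimately show ?thesis using Suc.prems(1) unfolding coherent_D_def by simp
  qed
qed

lemma posi_subset_D: "coherent_D D \<Longrightarrow> B \<subseteq> D \<Longrightarrow> posi B \<subseteq> D"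
  unfolding posi_def using coh_sum by blast

lemma posi_gambles: "B \<subseteq> gambles \<Longrightarrow> posi B \<subseteq> gambles"
  unfolding posi_def using gambles_sum[of "{..<_}"] by blast



definition NE :: "(nat \<Rightarrow> 'w \<Rightarrow> real) \<Rightarrow> nat \<Rightarrow> ('w \<Rightarrow> real) set" where
  "NE g n = {h. \<exists>mu p. (\<forall>i<n. mu i \<ge> (0::real)) \<and> p \<in> gambles \<and> (\<forall>w. p w \<ge> 0)
      \<and> ((\<exists>i<n. mu i > 0) \<or> (\<exists>w. p w \<noteq> 0)) \<and> h = (\<lambda>w. (\<Sum>i<n. mu i * g i w) + p w)}"

lemma NE_contains: "i < n \<Longrightarrow> g i \<in> NE g n"
  unfolding NE_def
  apply (rule CollectI, rule exI[of _ "\<lambda>j. if j = i then 1 else 0"], rule exI[of _ "\<lambda>w. 0"])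
  apply (simp add: gambles_zero)
  apply (rule ext)
  apply (simp add: if_distrib[of "\<lambda>x. x * _"] sum.delta cong: if_cong)
  done

lemma NE_coherent:
  fixes g :: "nat \<Rightarrow> 'w \<Rightarrow> real"
  assumes g: "\<forall>i<n. g i \<in> gambles" and z: "(\<lambda>w. 0) \<notin> NE g n"
  shows "coherent_D (NE g n)"
  unfolding coherent_D_def
proof (intro conjI)
  show "NE g n \<subseteq> gambles"
  proof
    fix h assume "h \<in> NE g n"
    then obtain mu p where "p \<in> gambles" "h = (\<lambda>w. (\<Sum>i<n. mu i * g i w) + p w)"
      unfolding NE_def by blast
    moreover have "(\<lambda>w. \<Sum>i<n. mu i * g i w) \<in> gambles" using gambles_sum[of "{..<n}" g mu] g by auto
    ultimately show "h \<in> gambles" using gambles_add by auto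
  qed
  show "(\<lambda>w. 0) \<notin> NE g n" by (rule z)
  show "posgambles \<subseteq> NE g n"
  proof
    fix f :: "'w \<Rightarrow> real" assume f: "f \<in> posgambles"
    show "f \<in> NE g n" unfolding NE_def
      apply (rule CollectI, rule exI[of _ "\<lambda>j. 0"], rule exI[of _ f])
      using f by (auto simp: posgambles_def)
  qed
  show "\<forall>h\<in>NE g n. \<forall>l::real. l > 0 \<longrightarrow> (\<lambda>w. l * h w) \<in> NE g n"
  proof (intro ballI allI impI)
    fix h and l :: real assume h: "h \<in> NE g n" and l: "l > 0"
    then obtain mu p where A: "\<forall>i<n. mu i \<ge> (0::real)" "p \<in> gambles" "\<forall>w. p w \<ge> 0"
      "(\<exists>i<n. mu i > 0) \<or> (\<exists>w. p w \<noteq> 0)" "h = (\<lambda>w. (\<Sum>i<n. mu i * g i w) + p w)"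
      unfolding NE_def by blast
    show "(\<lambda>w. l * h w) \<in> NE g n" unfolding NE_def
      apply (rule CollectI, rule exI[of _ "\<lambda>i. l * mu i"], rule exI[of _ "\<lambda>w. l * p w"])
      using A l by (auto simp: gambles_scale distrib_left sum_distrib_left mult.assoc)
  qed
  show "\<forall>f\<in>NE g n. \<forall>h\<in>NE g n. (\<lambda>w. f w + h w) \<in> NE g n"
  proof (intro ballI)
    fix f h assume f: "f \<in> NE g n" and h: "h \<in> NE g n"
    obtain mu p where A: "\<forall>i<n. mu i \<ge> (0::real)" "p \<in> gambles" "\<forall>w. p w \<ge> 0"
      "(\<exists>i<n. mu i > 0) \<or> (\<exists>w. p w \<noteq> 0)" "f = (\<lambda>w. (\<Sum>i<n. mu i * g i w) + p w)"
      using f unfolding NE_def by blast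
    obtain mu' p' where C: "\<forall>i<n. mu' i \<ge> (0::real)" "p' \<in> gambles" "\<forall>w. p' w \<ge> 0"
      "(\<exists>i<n. mu' i > 0) \<or> (\<exists>w. p' w \<noteq> 0)" "h = (\<lambda>w. (\<Sum>i<n. mu' i * g i w) + p' w)"
      using h unfolding NE_def by blast
    have e: "(\<lambda>w. f w + h w) = (\<lambda>w. (\<Sum>i<n. (mu i + mu' i) * g i w) + (p w + p' w))"
      using A C by (auto simp: distrib_right sum.distrib)
    have "(\<exists>i<n. mu i + mu' i > 0) \<or> (\<exists>w. p w + p' w \<noteq> 0)"
      using A(1,3,4) C(1,3,4) by (smt (verit))
    then show "(\<lambda>w. f w + h w) \<in> NE g n" unfolding NE_def e
      using A C gambles_add[OF A(2) C(2)] by (auto intro!: exI[of _ "\<lambda>i. mu i + mu' i"] add_nonneg_nonneg)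
  qed
qed


lemma key:
  fixes K :: "('w \<Rightarrow> real) set set" and As :: "nat \<Rightarrow> ('w \<Rightarrow> real) set"
  assumes K: "coherent_K K" and As: "\<forall>i<n. As i \<in> K" and Bg: "B \<subseteq> gambles" and BK: "B \<notin> K"
  shows "\<exists>D. coherent_D D \<and> (\<forall>i<n. As i \<inter> D \<noteq> {}) \<and> B \<inter> D = {}"
proof (rule ccontr)
  assume H: "\<not> ?thesis"
  have Kg: "K \<subseteq> Pow gambles"
    using K unfolding coherent_K_def by (elim conjE) assumption
  have K0: "\<forall>A\<in>K. A - {\<lambda>w. 0} \<in> K"
    using K unfolding coherent_K_def by (elim conjE) assumption
  have Kpos: "\<forall>g\<in>posgambles. {g} \<in> K"
    using K unfolding coherent_K_def by (elim conjE) assumption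
  have Ksup: "\<forall>A\<in>K. \<forall>B. A \<subseteq> B \<and> B \<subseteq> gambles \<longrightarrow> B \<in> K"
    using K unfolding coherent_K_def by (elim conjE) assumption
  have Kdom: "\<forall>A\<in>K. \<forall>F. (\<forall>g\<in>A. F g \<in> gambles \<and> (\<forall>w. F g w \<ge> g w)) \<longrightarrow> F ` A \<in> K"
    using K unfolding coherent_K_def by (elim conjE) assumption
  have Kadd: "\<forall>(n::nat) (As::nat \<Rightarrow> ('w \<Rightarrow> real) set)
          (F::(nat \<Rightarrow> 'w \<Rightarrow> real) \<Rightarrow> 'w \<Rightarrow> real).
          (\<forall>i<n. As i \<in> K) \<and>
          (\<forall>gs \<in> PiE {..<n} As. F gs \<in> posi (gs ` {..<n}))
          \<longrightarrow> F ` (PiE {..<n} As) \<in> K"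
    using K unfolding coherent_K_def by (elim conjE) assumption
  have Bpos: "B \<inter> posgambles = {}"
  proof (rule ccontr)
    assume "B \<inter> posgambles \<noteq> {}"
    then obtain g where "g \<in> B" "g \<in> posgambles" by blast
    then show False using Kpos Ksup Bg BK by blast
  qed
  have step: "\<exists>a. a \<in> posi (gs ` {..<n}) \<and> (\<exists>h\<in>insert (\<lambda>w. 0) B. \<forall>w. a w \<le> h w)"
    if gs: "gs \<in> PiE {..<n} As" for gs
  proof -
    have gsg: "\<forall>i<n. gs i \<in> gambles" using gs As Kg by (auto simp: PiE_def Pi_def)
    have "\<exists>h\<in>insert (\<lambda>w. 0) B. h \<in> NE gs n"
    proof (cases "(\<lambda>w. 0) \<in> NE gs n")
      case True then show ?thesis by blast
    next
      case False
      then have "coherent_D (NE gs n)" using NE_coherent gsg by blast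
      moreover have "\<forall>i<n. As i \<inter> NE gs n \<noteq> {}" using NE_contains[of _ n gs] gs by (auto simp: PiE_def Pi_def)
      ultimately show ?thesis using H by blast
    qed
    then obtain h mu p where hB: "h \<in> insert (\<lambda>w. 0) B" and A: "\<forall>i<n. mu i \<ge> (0::real)" "p \<in> gambles" "\<forall>w. p w \<ge> 0"
      "(\<exists>i<n. mu i > 0) \<or> (\<exists>w. p w \<noteq> 0)" "h = (\<lambda>w. (\<Sum>i<n. mu i * gs i w) + p w)"
      unfolding NE_def by blast
    define S where "S = {i. i < n \<and> mu i > 0}"
    have "S \<noteq> {}"
    proof
      assume "S = {}"
      then have m0: "\<forall>i<n. mu i = 0" using A(1) by (force simp: S_def)
      then have hp: "h = p" using A(5) by simp
      have "\<exists>w. p w \<noteq> 0" using A(4) m0 by auto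
      then have "p \<in> posgambles" using A(2,3) by (simp add: posgambles_def)
      moreover have "p \<noteq> (\<lambda>w. 0)" using \<open>\<exists>w. p w \<noteq> 0\<close> by auto
      ultimately show False using hB hp Bpos by auto
    qed
    have fS: "finite S" by (simp add: S_def)
    define a where "a = (\<lambda>w. \<Sum>i\<in>S. mu i * gs i w)"
    have "a \<in> posi (gs ` {..<n})" unfolding a_def
      using posi_finite[OF fS \<open>S \<noteq> {}\<close>, of mu gs "gs ` {..<n}"] by (auto simp: S_def)
    moreover have "\<forall>w. a w \<le> h w"
    proof
      fix w
      have "a w = (\<Sum>i<n. mu i * gs i w)" unfolding a_def
        by (rule sum.mono_neutral_left) (use A(1) in \<open>auto simp: S_def\<close>)
      then show "a w \<le> h w" using A(3,5) by simp
    qed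
    ultimately show ?thesis using hB by (intro exI[of _ a]) auto
  qed
  define F where "F gs = (SOME a. a \<in> posi (gs ` {..<n}) \<and> (\<exists>h\<in>insert (\<lambda>w. 0) B. \<forall>w. a w \<le> h w))" for gs
  have Fp: "F gs \<in> posi (gs ` {..<n}) \<and> (\<exists>h\<in>insert (\<lambda>w. 0) B. \<forall>w. F gs w \<le> h w)"
    if "gs \<in> PiE {..<n} As" for gs
    using step[OF that] unfolding F_def by (rule someI_ex)
  have FK: "F ` PiE {..<n} As \<in> K" using Kadd[rule_format, of n As F] As Fp by blast
  define G where "G a = (if \<exists>h\<in>B. \<forall>w. a w \<le> h w then SOME h. h \<in> B \<and> (\<forall>w. a w \<le> h w) else (\<lambda>w. 0))" for a :: "'w \<Rightarrow> real"
  have Gp: "G a \<in> insert (\<lambda>w. 0) B \<and> (\<forall>w. G a w \<ge> a w)" if a_in: "a \<in> F ` PiE {..<n} As" for a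
  proof -
    obtain gs where gs: "gs \<in> PiE {..<n} As" "a = F gs" using a_in by blast
    obtain h where h: "h \<in> insert (\<lambda>w. 0) B" "\<forall>w. a w \<le> h w" using Fp[OF gs(1)] gs(2) by blast
    show ?thesis
    proof (cases "\<exists>h\<in>B. \<forall>w. a w \<le> h w")
      case True
      then have "G a \<in> B \<and> (\<forall>w. a w \<le> G a w)" unfolding G_def
        using someI_ex[of "\<lambda>h. h \<in> B \<and> (\<forall>w. a w \<le> h w)"] by auto
      then show ?thesis by auto
    next
      case False
      then have "h = (\<lambda>w. 0)" using h by auto
      then show ?thesis using False h unfolding G_def by auto
    qed
  qed
  have Gq: "\<forall>g\<in>F ` PiE {..<n} As. G g \<in> gambles \<and> (\<forall>w. G g w \<ge> g w)"
  proof
    fix g assume "g \<in> F ` PiE {..<n} As"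
    from Gp[OF this] show "G g \<in> gambles \<and> (\<forall>w. G g w \<ge> g w)" using Bg gambles_zero by auto
  qed
  have "G ` (F ` PiE {..<n} As) \<in> K"
    by (rule Kdom[rule_format, OF FK]) (use Gq in blast)
  then have "G ` (F ` PiE {..<n} As) - {\<lambda>w. 0} \<in> K" using K0 by blast
  moreover have "G ` (F ` PiE {..<n} As) - {\<lambda>w. 0} \<subseteq> B"
  proof
    fix x assume "x \<in> G ` (F ` PiE {..<n} As) - {\<lambda>w. 0}"
    then obtain g where "g \<in> F ` PiE {..<n} As" "x = G g" "x \<noteq> (\<lambda>w. 0)" by blast
    then show "x \<in> B" using Gp by blast
  qed
  ultimately have "B \<in> K" using Ksup Bg by blast
  then show False using BK by blast
qed


lemma key_set:
  fixes K :: "('w \<Rightarrow> real) set set"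
  assumes K: "coherent_K K" and S: "finite S" "S \<subseteq> K" and Bg: "B \<subseteq> gambles" and BK: "B \<notin> K"
  shows "\<exists>D. coherent_D D \<and> (\<forall>A\<in>S. A \<inter> D \<noteq> {}) \<and> B \<inter> D = {}"
proof -
  obtain f where f: "bij_betw f {0..<card S} S" using ex_bij_betw_nat_finite[OF S(1)] by blast
  have "\<forall>i<card S. f i \<in> K" using f S(2) by (auto simp: bij_betw_def)
  then obtain D where D: "coherent_D D" "\<forall>i<card S. f i \<inter> D \<noteq> {}" "B \<inter> D = {}"
    using key[OF K _ Bg BK] by blast
  have "\<forall>A\<in>S. A \<inter> D \<noteq> {}"
  proof
    fix A assume "A \<in> S"
    then have "A \<in> f ` {0..<card S}" using f by (simp add: bij_betw_def)
    then obtain i where "i \<in> {0..<card S}" "A = f i" by blast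
    then show "A \<inter> D \<noteq> {}" using D(2) by auto
  qed
  then show ?thesis using D by blast
qed

lemma one_pos: "(\<lambda>w. 1::real) \<in> posgambles"
  by (auto simp: posgambles_def gambles_def)



lemma coh_add: "coherent_D D \<Longrightarrow> f \<in> D \<Longrightarrow> g \<in> D \<Longrightarrow> (\<lambda>w. f w + g w) \<in> D"
  by (simp add: coherent_D_def)

theorem mainTheorem12:
  fixes K :: "('w \<Rightarrow> real) set set"
  assumes "K \<subseteq> Pow gambles"
  shows "coherent_K K \<longleftrightarrow>
    (\<exists>\<D> :: ('w \<Rightarrow> real) set set set.
       \<D> \<noteq> {}
     \<and> (\<forall>\<E>\<in>\<D>. \<E> \<noteq> {} \<and> (\<forall>D\<in>\<E>. coherent_D D))
     \<and> (\<forall>\<F>. \<F> \<subseteq> \<D> \<and> finite \<F> \<and> \<F> \<noteq> {} \<longrightarrow> \<Inter>\<F> \<noteq> {})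
     \<and> (\<forall>B. B \<subseteq> gambles \<longrightarrow>
          (B \<in> K \<longleftrightarrow>
            (\<exists>\<F>. \<F> \<subseteq> \<D> \<and> finite \<F> \<and> \<F> \<noteq> {} \<and>
                 (\<forall>D\<in>\<Inter>\<F>. B \<inter> D \<noteq> {})))))"
proof
  assume K: "coherent_K K"
  have Kg: "K \<subseteq> Pow gambles"
    using K unfolding coherent_K_def by (elim conjE) assumption
  have Ke: "{} \<notin> K"
    using K unfolding coherent_K_def by (elim conjE) assumption
  have Kpos: "\<forall>g\<in>posgambles. {g} \<in> K"
    using K unfolding coherent_K_def by (elim conjE) assumption
  define Dk where "Dk A = {D. coherent_D D \<and> A \<inter> D \<noteq> {}}" for A :: "('w \<Rightarrow> real) set"
  have inter: "D \<in> \<Inter>(Dk ` S) \<longleftrightarrow> coherent_D D \<and> (\<forall>A\<in>S. A \<inter> D \<noteq> {})" if "S \<noteq> {}" for S D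
    using that by (auto simp: Dk_def)
  have ex: "\<exists>D. D \<in> \<Inter>(Dk ` S)" if "finite S" "S \<subseteq> K" "S \<noteq> {}" for S
    using key_set[OF K that(1,2) _ Ke] inter[OF that(3)] by auto
  show "\<exists>\<D> :: ('w \<Rightarrow> real) set set set.
       \<D> \<noteq> {}
     \<and> (\<forall>\<E>\<in>\<D>. \<E> \<noteq> {} \<and> (\<forall>D\<in>\<E>. coherent_D D))
     \<and> (\<forall>\<F>. \<F> \<subseteq> \<D> \<and> finite \<F> \<and> \<F> \<noteq> {} \<longrightarrow> \<Inter>\<F> \<noteq> {})
     \<and> (\<forall>B. B \<subseteq> gambles \<longrightarrow>
          (B \<in> K \<longleftrightarrow>
            (\<exists>\<F>. \<F> \<subseteq> \<D> \<and> finite \<F> \<and> \<F> \<noteq> {} \<and>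
                 (\<forall>D\<in>\<Inter>\<F>. B \<inter> D \<noteq> {}))))"
  proof (rule exI[of _ "Dk ` K"], intro conjI allI impI ballI)
    show "Dk ` K \<noteq> {}" using Kpos one_pos by blast
  next
    fix E assume "E \<in> Dk ` K"
    then obtain A where A: "A \<in> K" "E = Dk A" by blast
    show "E \<noteq> {}" using ex[of "{A}"] A by auto
  next
    fix E D assume "E \<in> Dk ` K" "D \<in> E"
    then show "coherent_D D" by (auto simp: Dk_def)
  next
    fix FF assume FF: "FF \<subseteq> Dk ` K \<and> finite FF \<and> FF \<noteq> {}"
    then obtain S where S: "S \<subseteq> K" "finite S" "FF = Dk ` S"
      using finite_subset_image[of FF Dk K] by blast
    show "\<Inter>FF \<noteq> {}" using ex[of S] S FF by auto
  next
    fix B :: "('w \<Rightarrow> real) set" assume Bg: "B \<subseteq> gambles"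
    show "B \<in> K \<longleftrightarrow> (\<exists>FF. FF \<subseteq> Dk ` K \<and> finite FF \<and> FF \<noteq> {} \<and> (\<forall>D\<in>\<Inter>FF. B \<inter> D \<noteq> {}))"
    proof
      assume "B \<in> K"
      then show "\<exists>FF. FF \<subseteq> Dk ` K \<and> finite FF \<and> FF \<noteq> {} \<and> (\<forall>D\<in>\<Inter>FF. B \<inter> D \<noteq> {})"
        by (intro exI[of _ "{Dk B}"]) (auto simp: Dk_def)
    next
      assume "\<exists>FF. FF \<subseteq> Dk ` K \<and> finite FF \<and> FF \<noteq> {} \<and> (\<forall>D\<in>\<Inter>FF. B \<inter> D \<noteq> {})"
      then obtain FF where FF: "FF \<subseteq> Dk ` K" "finite FF" "FF \<noteq> {}" "\<forall>D\<in>\<Inter>FF. B \<inter> D \<noteq> {}" by blast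
      then obtain S where S: "S \<subseteq> K" "finite S" "FF = Dk ` S"
        using finite_subset_image[of FF Dk K] by blast
      show "B \<in> K"
      proof (rule ccontr)
        assume "B \<notin> K"
        then obtain D where D: "coherent_D D" "\<forall>A\<in>S. A \<inter> D \<noteq> {}" "B \<inter> D = {}"
          using key_set[OF K S(2,1) Bg] by blast
        have "S \<noteq> {}" using S FF by auto
        then have "D \<in> \<Inter>FF" using inter[of S D] D(1,2) S(3) by simp
        then show False using FF(4) D(3) by blast
      qed
    qed
  qed
next
  assume "\<exists>\<D> :: ('w \<Rightarrow> real) set set set.
       \<D> \<noteq> {}
     \<and> (\<forall>\<E>\<in>\<D>. \<E> \<noteq> {} \<and> (\<forall>D\<in>\<E>. coherent_D D))
     \<and> (\<forall>\<F>. \<F> \<subseteq> \<D> \<and> finite \<F> \<and> \<F> \<noteq> {} \<longrightarrow> \<Inter>\<F> \<noteq> {})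
     \<and> (\<forall>B. B \<subseteq> gambles \<longrightarrow>
          (B \<in> K \<longleftrightarrow>
            (\<exists>\<F>. \<F> \<subseteq> \<D> \<and> finite \<F> \<and> \<F> \<noteq> {} \<and>
                 (\<forall>D\<in>\<Inter>\<F>. B \<inter> D \<noteq> {}))))"
  then obtain DD :: "('w \<Rightarrow> real) set set set" where
    D1: "DD \<noteq> {}" and D2: "\<forall>E\<in>DD. E \<noteq> {} \<and> (\<forall>D\<in>E. coherent_D D)"
    and D3: "\<forall>FF. FF \<subseteq> DD \<and> finite FF \<and> FF \<noteq> {} \<longrightarrow> \<Inter>FF \<noteq> {}"
    and D4: "\<forall>B. B \<subseteq> gambles \<longrightarrow> (B \<in> K \<longleftrightarrow>
            (\<exists>FF. FF \<subseteq> DD \<and> finite FF \<and> FF \<noteq> {} \<and> (\<forall>D\<in>\<Inter>FF. B \<inter> D \<noteq> {})))"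
    by (elim exE conjE) (rule that)
  have Kg: "K \<subseteq> Pow gambles" by fact
  have KP: "\<exists>FF. FF \<subseteq> DD \<and> finite FF \<and> FF \<noteq> {} \<and> (\<forall>D\<in>\<Inter>FF. A \<inter> D \<noteq> {})" if "A \<in> K" for A
    using D4[rule_format, of A] Kg that by blast
  have PK: "A \<in> K" if "A \<subseteq> gambles" "FF \<subseteq> DD" "finite FF" "FF \<noteq> {}" "\<forall>D\<in>\<Inter>FF. A \<inter> D \<noteq> {}" for A FF
    using D4[rule_format, of A] that by blast
  have coh: "coherent_D D" if "FF \<subseteq> DD" "FF \<noteq> {}" "D \<in> \<Inter>FF" for FF D
    using that D2 by blast
  obtain E0 where E0: "E0 \<in> DD" using D1 by blast
  show "coherent_K K" unfolding coherent_K_def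
  proof (intro conjI)
    show "K \<subseteq> Pow gambles" by fact
    show "{} \<notin> K"
    proof
      assume "{} \<in> K"
      then obtain FF where "FF \<subseteq> DD" "finite FF" "FF \<noteq> {}" "\<forall>D\<in>\<Inter>FF. {} \<inter> D \<noteq> {}" using KP[OF \<open>{} \<in> K\<close>] by blast
      moreover from this have "\<Inter>FF \<noteq> {}" using D3 by blast
      ultimately show False by blast
    qed
    show "\<forall>A\<in>K. A - {\<lambda>w. 0} \<in> K"
    proof
      fix A assume A: "A \<in> K"
      then obtain FF where FF: "FF \<subseteq> DD" "finite FF" "FF \<noteq> {}" "\<forall>D\<in>\<Inter>FF. A \<inter> D \<noteq> {}" using KP[OF A] by blast
      have "\<forall>D\<in>\<Inter>FF. (A - {\<lambda>w. 0}) \<inter> D \<noteq> {}"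
      proof
        fix D assume D: "D \<in> \<Inter>FF"
        then have "(\<lambda>w. 0) \<notin> D" using coh[OF FF(1,3) D] unfolding coherent_D_def by blast
        then show "(A - {\<lambda>w. 0}) \<inter> D \<noteq> {}" using FF(4) D by blast
      qed
      moreover have "A - {\<lambda>w. 0} \<subseteq> gambles" using A Kg by blast
      ultimately show "A - {\<lambda>w. 0} \<in> K" using PK[OF _ FF(1,2,3)] by blast
    qed
    show "\<forall>g\<in>posgambles. {g} \<in> K"
    proof
      fix g :: "'w \<Rightarrow> real" assume g: "g \<in> posgambles"
      have "\<forall>D\<in>\<Inter>{E0}. {g} \<inter> D \<noteq> {}"
      proof
        fix D assume "D \<in> \<Inter>{E0}"
        then have "coherent_D D" using coh[of "{E0}" D] E0 by blast
        then show "{g} \<inter> D \<noteq> {}" using g unfolding coherent_D_def by blast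
      qed
      moreover have "{g} \<subseteq> gambles" using g by (auto simp: posgambles_def)
      ultimately show "{g} \<in> K" using PK[of "{g}" "{E0}"] E0 by simp
    qed
    show "\<forall>A\<in>K. \<forall>B. A \<subseteq> B \<and> B \<subseteq> gambles \<longrightarrow> B \<in> K"
    proof (intro ballI allI impI)
      fix A B assume A: "A \<in> K" and B: "A \<subseteq> B \<and> B \<subseteq> gambles"
      obtain FF where FF: "FF \<subseteq> DD" "finite FF" "FF \<noteq> {}" "\<forall>D\<in>\<Inter>FF. A \<inter> D \<noteq> {}" using KP[OF A] by blast
      have "\<forall>D\<in>\<Inter>FF. B \<inter> D \<noteq> {}" using FF(4) B by blast
      then show "B \<in> K" using PK[OF _ FF(1,2,3)] B by blast
    qed
    show "\<forall>A\<in>K. \<forall>F. (\<forall>g\<in>A. F g \<in> gambles \<and> (\<forall>w. F g w \<ge> g w)) \<longrightarrow> F ` A \<in> K"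
    proof (intro ballI allI impI)
      fix A F assume A: "A \<in> K" and F: "\<forall>g\<in>A. F g \<in> gambles \<and> (\<forall>w. F g w \<ge> g w)"
      obtain FF where FF: "FF \<subseteq> DD" "finite FF" "FF \<noteq> {}" "\<forall>D\<in>\<Inter>FF. A \<inter> D \<noteq> {}" using KP[OF A] by blast
      have "\<forall>D\<in>\<Inter>FF. F ` A \<inter> D \<noteq> {}"
      proof
        fix D assume D: "D \<in> \<Inter>FF"
        have cD: "coherent_D D" using coh[OF FF(1,3) D] .
        obtain g where g: "g \<in> A" "g \<in> D" using FF(4) D by blast
        have "F g \<in> D"
        proof (cases "F g = g")
          case True then show ?thesis using g by simp
        next
          case False
          have gg: "g \<in> gambles" using cD g unfolding coherent_D_def by blast
          have "(\<lambda>w. F g w - g w) \<in> posgambles"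
            unfolding posgambles_def using gambles_diff[of "F g" g] F g(1) gg False by (auto simp: fun_eq_iff)
          then have "(\<lambda>w. F g w - g w) \<in> D" using cD unfolding coherent_D_def by blast
          then have "(\<lambda>w. g w + (F g w - g w)) \<in> D" using coh_add[OF cD g(2)] by blast
          then show ?thesis by simp
        qed
        then show "F ` A \<inter> D \<noteq> {}" using g by blast
      qed
      moreover have "F ` A \<subseteq> gambles" using F by blast
      ultimately show "F ` A \<in> K" using PK[OF _ FF(1,2,3)] by blast
    qed
    show "\<forall>(n::nat) (As::nat \<Rightarrow> ('w \<Rightarrow> real) set)
          (F::(nat \<Rightarrow> 'w \<Rightarrow> real) \<Rightarrow> 'w \<Rightarrow> real).
          (\<forall>i<n. As i \<in> K) \<and>
          (\<forall>gs \<in> PiE {..<n} As. F gs \<in> posi (gs ` {..<n}))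
          \<longrightarrow> F ` (PiE {..<n} As) \<in> K"
    proof (intro allI impI, elim conjE)
      fix n :: nat and As :: "nat \<Rightarrow> ('w \<Rightarrow> real) set" and F :: "(nat \<Rightarrow> 'w \<Rightarrow> real) \<Rightarrow> 'w \<Rightarrow> real"
      assume As: "\<forall>i<n. As i \<in> K" and F: "\<forall>gs \<in> PiE {..<n} As. F gs \<in> posi (gs ` {..<n})"
      have "\<forall>i\<in>{..<n}. \<exists>FF. FF \<subseteq> DD \<and> finite FF \<and> FF \<noteq> {} \<and> (\<forall>D\<in>\<Inter>FF. As i \<inter> D \<noteq> {})"
        using KP As by simp
      then obtain FFs where FFs: "\<forall>i\<in>{..<n}. FFs i \<subseteq> DD \<and> finite (FFs i) \<and> FFs i \<noteq> {} \<and> (\<forall>D\<in>\<Inter>(FFs i). As i \<inter> D \<noteq> {})"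
        by (rule bchoice[elim_format]) blast
      define FF where "FF = insert E0 (\<Union>i\<in>{..<n}. FFs i)"
      have FF: "FF \<subseteq> DD" "finite FF" "FF \<noteq> {}" using FFs E0 by (auto simp: FF_def)
      have Asg: "\<forall>i<n. As i \<subseteq> gambles" using As Kg by blast
      have "\<forall>D\<in>\<Inter>FF. F ` (PiE {..<n} As) \<inter> D \<noteq> {}"
      proof
        fix D assume D: "D \<in> \<Inter>FF"
        have cD: "coherent_D D" using coh[OF FF(1,3) D] .
        have "\<forall>i<n. As i \<inter> D \<noteq> {}"
        proof (intro allI impI)
          fix i assume i: "i < n"
          then have "D \<in> \<Inter>(FFs i)" using D by (auto simp: FF_def)
          then show "As i \<inter> D \<noteq> {}" using FFs i by blast
        qed
        then have "\<forall>i\<in>{..<n}. \<exists>g. g \<in> As i \<inter> D" by blast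
        then obtain g where g: "\<forall>i\<in>{..<n}. g i \<in> As i \<inter> D" by (rule bchoice[elim_format]) blast
        define gs where "gs = restrict g {..<n}"
        have gs: "gs \<in> PiE {..<n} As" using g by (auto simp: gs_def)
        have "gs ` {..<n} \<subseteq> D" using g by (auto simp: gs_def)
        then have "F gs \<in> D" using posi_subset_D[OF cD] F gs by blast
        then show "F ` (PiE {..<n} As) \<inter> D \<noteq> {}" using gs by blast
      qed
      moreover have "F ` (PiE {..<n} As) \<subseteq> gambles"
      proof
        fix x assume "x \<in> F ` (PiE {..<n} As)"
        then obtain gs where gs: "gs \<in> PiE {..<n} As" "x = F gs" by blast
        have "gs ` {..<n} \<subseteq> gambles" using gs Asg by (auto simp: PiE_def Pi_def)
        then show "x \<in> gambles" using posi_gambles F gs by blast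
      qed
      ultimately show "F ` (PiE {..<n} As) \<in> K" using PK[OF _ FF(1,2,3)] by blast
    qed
  qed
qed


end
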